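(* Let $n\geq 3$ be odd. Then \[ \mu^-(A_{n+1}) \leq \mu^-(A_n) \quad\text{and}\quad \mu^+(A_{n+1}) \leq \mu^+(A_n). \]
   Context: All graphs are simple; eigenvalues of a graph are those of its $(0,1)$-adjacency matrix. For a graph $G$, $\mu^-(G)$ denotes the largest eigenvalue of $G$ that is less than $-1$, and $\mu^+(G)$ denotes the smallest positive eigenvalue of $G$. Threshold graphs from binary strings: given $b=b_1b_2\cdots b_n\in\{0,1\}^n$ with $b_1=0$, let $G_1$ be a single vertex $v_1$, and for $j=2,\ldots,n$ obtain $G_j$ from $G_{j-1}$ by adding a new vertex $v_j$ which is adjacent to all previous vertices if $b_j=1$ and isolated if $b_j=0$; $G(b)=G_n$. The anti-regular graph $A_n$ is the threshold graph $G(b)$ with $b=0101\cdots01$ (length $n$) when $n$ is even and $b=00101\cdots01$ (length $n$) when $n$ is odd. *)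

theory Defs
  imports "Jordan_Normal_Form.Char_Poly"
begin

text \<open>Threshold graph from a binary string b = b_1 ... b_n, represented 0-indexed as a
  list of booleans (True = 1). Vertex v_(k+1) is index k. For i < j, v_i ~ v_j iff b_j = 1.\<close>

definition threshold_adj :: "bool list \<Rightarrow> nat \<Rightarrow> nat \<Rightarrow> bool" where
  "threshold_adj b i j = (i \<noteq> j \<and> b ! (max i j))"

definition adj_matrix :: "bool list \<Rightarrow> real mat" where
  "adj_matrix b = mat (length b) (length b) (\<lambda>(i,j). if threshold_adj b i j then 1 else 0)"

definition antireg_string :: "nat \<Rightarrow> bool list" where
  "antireg_string n =
     (if even n then map (\<lambda>k. odd k) [0..<n]
      else map (\<lambda>k. k \<noteq> 0 \<and> even k) [0..<n])"

definition antireg_adj :: "nat \<Rightarrow> real mat" where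
  "antireg_adj n = adj_matrix (antireg_string n)"

definition mu_minus :: "real mat \<Rightarrow> real" where
  "mu_minus A = Max {x. eigenvalue A x \<and> x < -1}"

definition mu_plus :: "real mat \<Rightarrow> real" where
  "mu_plus A = Min {x. eigenvalue A x \<and> x > 0}"

end

theory Submission
  imports Defs
begin


definition rhs :: "(nat \<Rightarrow> bool) \<Rightarrow> nat \<Rightarrow> (nat \<Rightarrow> real) \<Rightarrow> nat \<Rightarrow> real" where
  "rhs \<beta> m x i = (if \<beta> i then (\<Sum>j<i. x j) else 0) + (\<Sum>j\<in>{i<..<m}. if \<beta> j then x j else 0)"

lemma sum_split3:
  fixes f :: "nat \<Rightarrow> real"
  assumes "i < m"
  shows "(\<Sum>j\<in>{0..<m}. f j) = (\<Sum>j<i. f j) + f i + (\<Sum>j\<in>{i<..<m}. f j)"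
proof -
  have "sum f {0..<m} = sum f {0..<i} + sum f {i..<m}" using sum.atLeastLessThan_concat[of 0 i m f] assms by simp
  moreover have "sum f {i..<m} = f i + sum f {Suc i..<m}" by (rule sum.atLeast_Suc_lessThan) fact
  moreover have "{Suc i..<m} = {i<..<m}" by auto
  ultimately show ?thesis by (simp add: atLeast0LessThan)
qed

lemma adj_mult:
  assumes len: "length b = m" and bb: "\<forall>j<m. b!j = \<beta> j" and i: "i < m"
  shows "(adj_matrix b *\<^sub>v vec m x) $ i = rhs \<beta> m x i"
proof -
  have "(adj_matrix b *\<^sub>v vec m x) $ i = (\<Sum>j\<in>{0..<m}. (if threshold_adj b i j then 1 else 0) * x j)"
    using i len by (simp add: adj_matrix_def scalar_prod_def)
  also have "\<dots> = (\<Sum>j<i. (if threshold_adj b i j then 1 else 0) * x j) + 0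
      + (\<Sum>j\<in>{i<..<m}. (if threshold_adj b i j then 1 else 0) * x j)"
    using sum_split3[OF i] by (simp add: threshold_adj_def)
  also have "(\<Sum>j<i. (if threshold_adj b i j then 1 else 0) * x j) = (if \<beta> i then (\<Sum>j<i. x j) else 0)"
    using i bb by (auto simp: threshold_adj_def max_def intro!: sum.cong)
  also have "(\<Sum>j\<in>{i<..<m}. (if threshold_adj b i j then 1 else 0) * x j) = (\<Sum>j\<in>{i<..<m}. if \<beta> j then x j else 0)"
    using i bb by (auto simp: threshold_adj_def max_def intro!: sum.cong)
  finally show ?thesis by (simp add: rhs_def)
qed

lemma eig_char:
  assumes len: "length b = m" and bb: "\<forall>j<m. b!j = \<beta> j"
  shows "eigenvalue (adj_matrix b) l \<longleftrightarrow> (\<exists>x. (\<exists>i<m. x i \<noteq> 0) \<and> (\<forall>i<m. l * x i = rhs \<beta> m x i))"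
proof
  assume "eigenvalue (adj_matrix b) l"
  then obtain v where v: "v \<in> carrier_vec m" "v \<noteq> 0\<^sub>v m" "adj_matrix b *\<^sub>v v = l \<cdot>\<^sub>v v"
    unfolding eigenvalue_def eigenvector_def using len by (auto simp: adj_matrix_def)
  define x where "x = (\<lambda>i. v $ i)"
  have vx: "v = vec m x" using v(1) unfolding x_def by auto
  have "\<exists>i<m. x i \<noteq> 0"
  proof (rule ccontr)
    assume "\<not> ?thesis"
    then have "v = 0\<^sub>v m" using v(1) unfolding x_def by (auto intro!: eq_vecI)
    with v(2) show False by simp
  qed
  moreover have "\<forall>i<m. l * x i = rhs \<beta> m x i"
  proof (intro allI impI)
    fix i assume i: "i < m"
    have "(adj_matrix b *\<^sub>v v) $ i = (l \<cdot>\<^sub>v v) $ i" using v(3) by simp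
    then show "l * x i = rhs \<beta> m x i" using adj_mult[OF len bb i, of x] vx i by simp
  qed
  ultimately show "\<exists>x. (\<exists>i<m. x i \<noteq> 0) \<and> (\<forall>i<m. l * x i = rhs \<beta> m x i)" by blast
next
  assume "\<exists>x. (\<exists>i<m. x i \<noteq> 0) \<and> (\<forall>i<m. l * x i = rhs \<beta> m x i)"
  then obtain x i0 where x: "i0 < m" "x i0 \<noteq> 0" "\<forall>i<m. l * x i = rhs \<beta> m x i" by blast
  define v where "v = vec m x"
  have "v \<in> carrier_vec (dim_row (adj_matrix b))" using len by (simp add: v_def adj_matrix_def)
  moreover have "v \<noteq> 0\<^sub>v (dim_row (adj_matrix b))"
  proof
    assume "v = 0\<^sub>v (dim_row (adj_matrix b))"
    then have "v $ i0 = 0" using x(1) len by (simp add: adj_matrix_def)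
    then show False using x(1,2) by (simp add: v_def)
  qed
  moreover have "adj_matrix b *\<^sub>v v = l \<cdot>\<^sub>v v"
  proof (rule eq_vecI)
    show "dim_vec (adj_matrix b *\<^sub>v v) = dim_vec (l \<cdot>\<^sub>v v)" using len by (simp add: v_def adj_matrix_def)
    fix i assume "i < dim_vec (l \<cdot>\<^sub>v v)"
    then have i: "i < m" by (simp add: v_def)
    show "(adj_matrix b *\<^sub>v v) $ i = (l \<cdot>\<^sub>v v) $ i"
      using adj_mult[OF len bb i, of x] x(3) i by (simp add: v_def)
  qed
  ultimately show "eigenvalue (adj_matrix b) l" unfolding eigenvalue_def eigenvector_def by blast
qed



lemma Rstep: "Suc i < m \<Longrightarrow> (\<Sum>j\<in>{i<..<m}. g j) = g (Suc i) + (\<Sum>j\<in>{Suc i<..<m}. (g j::real))"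
proof -
  assume a: "Suc i < m"
  have "{i<..<m} = insert (Suc i) {Suc i<..<m}" using a by auto
  then show ?thesis by simp
qed

lemma Rstep2: "j = Suc i \<Longrightarrow> j < m \<Longrightarrow> (\<Sum>k\<in>{i<..<m}. g k) = g j + (\<Sum>k\<in>{j<..<m}. (g k::real))"
  using Rstep[of i m g] by simp

lemma Rlast2: "j = Suc i \<Longrightarrow> (\<Sum>k\<in>{i<..<j}. (g k::real)) = 0"
proof -
  assume "j = Suc i"
  then have "{i<..<j} = {}" by auto
  then show ?thesis by simp
qed

lemma Lstep2: "j = Suc i \<Longrightarrow> (\<Sum>k<j. (x k::real)) = (\<Sum>k<i. x k) + x i"
  by simp

lemma E1: assumes "2*t+2 < m" shows "rhs odd m x (2*t) - rhs odd m x (2*t+2) = x (2*t+1)"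
proof -
  let ?g = "\<lambda>j. if odd j then x j else (0::real)"
  have "sum ?g {2*t<..<m} = x (2*t+1) + sum ?g {2*t+2<..<m}"
    using Rstep2[of "2*t+1" "2*t" m ?g] Rstep2[of "2*t+2" "2*t+1" m ?g] assms by simp
  then show ?thesis unfolding rhs_def by simp
qed

lemma E2: assumes "2*t+3 < m" shows "rhs odd m x (2*t+3) - rhs odd m x (2*t+1) = x (2*t+1) + x(2*t+2) - x(2*t+3)"
proof -
  let ?g = "\<lambda>j. if odd j then x j else (0::real)"
  have "sum ?g {2*t+1<..<m} = x (2*t+3) + sum ?g {2*t+3<..<m}"
    using Rstep2[of "2*t+2" "2*t+1" m ?g] Rstep2[of "2*t+3" "2*t+2" m ?g] assms by simp
  moreover have "(\<Sum>j<2*t+3. x j) = (\<Sum>j<2*t+1. x j) + x (2*t+1) + x (2*t+2)"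
    using Lstep2[of "2*t+2" "2*t+1" x] Lstep2[of "2*t+3" "2*t+2" x] by simp
  ultimately show ?thesis unfolding rhs_def by simp
qed

lemma E3: "1 < m \<Longrightarrow> rhs odd m x 1 - rhs odd m x 0 = x 0 - x 1"
  unfolding rhs_def using Rstep2[of 1 0 m] by simp

lemma E4: "rhs odd (2*k+2) x (2*k) = x (2*k+1)"
  unfolding rhs_def using Rstep2[of "2*k+1" "2*k" "2*k+2"] Rlast2[of "2*k+2" "2*k+1"] by simp

definition bo :: "nat \<Rightarrow> bool" where "bo i = (i \<noteq> 0 \<and> even i)"

lemma O1: "1 < m \<Longrightarrow> rhs bo m x 0 = rhs bo m x 1"
  unfolding rhs_def bo_def using Rstep2[of 1 0 m] by simp

lemma O2: assumes "2*t+3 < m" shows "rhs bo m x (2*t+1) - rhs bo m x (2*t+3) = x (2*t+2)"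
proof -
  let ?g = "\<lambda>j. if bo j then x j else (0::real)"
  have "sum ?g {2*t+1<..<m} = x (2*t+2) + sum ?g {2*t+3<..<m}"
    using Rstep2[of "2*t+2" "2*t+1" m ?g] Rstep2[of "2*t+3" "2*t+2" m ?g] assms by (simp add: bo_def)
  then show ?thesis unfolding rhs_def by (simp add: bo_def)
qed

lemma O3: assumes "2*t+4 < m" shows "rhs bo m x (2*t+4) - rhs bo m x (2*t+2) = x (2*t+2) + x(2*t+3) - x(2*t+4)"
proof -
  let ?g = "\<lambda>j. if bo j then x j else (0::real)"
  have "sum ?g {2*t+2<..<m} = x (2*t+4) + sum ?g {2*t+4<..<m}"
    using Rstep2[of "2*t+3" "2*t+2" m ?g] Rstep2[of "2*t+4" "2*t+3" m ?g] assms by (simp add: bo_def)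
  moreover have "(\<Sum>j<2*t+4. x j) = (\<Sum>j<2*t+2. x j) + x (2*t+2) + x (2*t+3)"
    using Lstep2[of "2*t+3" "2*t+2" x] Lstep2[of "2*t+4" "2*t+3" x] by simp
  ultimately show ?thesis unfolding rhs_def by (simp add: bo_def)
qed

lemma O4: assumes "2 < m" shows "rhs bo m x 2 - rhs bo m x 1 = x 0 + x 1 - x 2"
proof -
  let ?g = "\<lambda>j. if bo j then x j else (0::real)"
  have "sum ?g {1<..<m} = x 2 + sum ?g {2<..<m}"
    using Rstep2[of 2 1 m ?g] assms by (simp add: bo_def)
  moreover have "(\<Sum>j<2. x j) = x 0 + x 1"
    by (simp add: numeral_2_eq_2)
  ultimately show ?thesis unfolding rhs_def by (simp add: bo_def)
qed

lemma O5: "rhs bo (2*j+3) x (2*j+1) = x (2*j+2)"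
proof -
  let ?g = "\<lambda>j. if bo j then x j else (0::real)"
  have "sum ?g {2*j+1<..<2*j+3} = x (2*j+2)"
    using Rstep2[of "2*j+2" "2*j+1" "2*j+3" ?g] Rlast2[of "2*j+3" "2*j+2" ?g] by (simp add: bo_def)
  then show ?thesis unfolding rhs_def by (simp add: bo_def)
qed



fun PQ :: "real \<Rightarrow> real \<Rightarrow> nat \<Rightarrow> real \<times> real" where
  "PQ l q0 0 = (1, q0)"
| "PQ l q0 (Suc t) = (let p' = fst (PQ l q0 t) - snd (PQ l q0 t) / l in (p', snd (PQ l q0 t) + p' / (l+1)))"

definition P where "P l q0 t = fst (PQ l q0 t)"
definition Q where "Q l q0 t = snd (PQ l q0 t)"

lemma P0[simp]: "P l q0 0 = 1" and Q0[simp]: "Q l q0 0 = q0"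
  by (simp_all add: P_def Q_def)

lemma PS: "P l q0 (Suc t) = P l q0 t - Q l q0 t / l"
  by (simp add: P_def Q_def Let_def)

lemma QS: "Q l q0 (Suc t) = Q l q0 t + P l q0 (Suc t) / (l+1)"
  by (simp add: P_def Q_def Let_def)

lemma even_char:
  fixes l :: real
  assumes l0: "l \<noteq> 0" and l1: "l \<noteq> -1"
  shows "(\<exists>x. (\<exists>i<2*k+2. x i \<noteq> 0) \<and> (\<forall>i<2*k+2. l * x i = rhs odd (2*k+2) x i))
         \<longleftrightarrow> P l 1 (k+1) = 0"
proof
  have l1': "l + 1 \<noteq> 0" using l1 by linarith
  assume "\<exists>x. (\<exists>i<2*k+2. x i \<noteq> 0) \<and> (\<forall>i<2*k+2. l * x i = rhs odd (2*k+2) x i)"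
  then obtain x i0 where i0: "i0 < 2*k+2" "x i0 \<noteq> 0" and eq: "\<And>i. i < 2*k+2 \<Longrightarrow> l * x i = rhs odd (2*k+2) x i"
    by blast
  have "l * x 1 - l * x 0 = x 0 - x 1" using E3[of "2*k+2" x] eq[of 0] eq[of 1] by simp
  then have "(l+1) * (x 1 - x 0) = 0" by (simp add: algebra_simps)
  then have x1: "x 1 = x 0" using l1' by simp
  have ind: "x (2*t) = x 0 * P l 1 t \<and> x (2*t+1) = x 0 * Q l 1 t" if "t \<le> k" for t
    using that
  proof (induction t)
    case 0
    then show ?case using x1 by simp
  next
    case (Suc t)
    then have IH: "x (2*t) = x 0 * P l 1 t" "x (2*t+1) = x 0 * Q l 1 t" by auto
    have a: "l * x (2*t) - l * x (2*t+2) = x (2*t+1)"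
      using E1[of t "2*k+2" x] eq[of "2*t"] eq[of "2*t+2"] Suc.prems by simp
    have b: "l * x (2*t+3) - l * x (2*t+1) = x (2*t+1) + x (2*t+2) - x (2*t+3)"
      using E2[of t "2*k+2" x] eq[of "2*t+3"] eq[of "2*t+1"] Suc.prems by simp
    have c: "x (2*t+2) = x 0 * P l 1 (Suc t)"
    proof -
      have "x (2*t+2) = x (2*t) - x (2*t+1) / l" using a l0 by (simp add: field_simps)
      then show ?thesis using IH by (simp add: PS algebra_simps)
    qed
    have d: "x (2*t+3) = x 0 * Q l 1 (Suc t)"
    proof -
      have "(l+1) * x (2*t+3) = (l+1) * x (2*t+1) + x (2*t+2)" using b by (simp add: algebra_simps)
      then have "x (2*t+3) = x (2*t+1) + x (2*t+2) / (l+1)" using l1' by (simp add: field_simps)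
      then show ?thesis using IH c by (simp add: QS algebra_simps)
    qed
    show ?case using c d by (simp add: numeral_eq_Suc)
  qed
  have e: "l * x (2*k) = x (2*k+1)" using E4[of k x] eq[of "2*k"] by simp
  have x0: "x 0 \<noteq> 0"
  proof
    assume z: "x 0 = 0"
    have "x i0 = 0"
    proof -
      obtain t r where "i0 = 2*t + r" "r < 2" by (metis mod_less_divisor mult_div_mod_eq zero_less_numeral)
      moreover then have "t \<le> k" using i0 by linarith
      ultimately show ?thesis using ind[of t] z by (cases r) (auto simp: numeral_2_eq_2)
    qed
    with i0 show False by simp
  qed
  have "x 0 * (l * P l 1 k - Q l 1 k) = 0" using e ind[of k] by (simp add: algebra_simps)
  then have "l * P l 1 k = Q l 1 k" using x0 by simp
  then show "P l 1 (k+1) = 0" using l0 by (simp add: PS field_simps)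
next
  have l1': "l + 1 \<noteq> 0" using l1 by linarith
  assume end0: "P l 1 (k+1) = 0"
  define x where "x i = (if even i then P l 1 (i div 2) else Q l 1 (i div 2))" for i
  define D where "D i = l * x i - rhs odd (2*k+2) x i" for i
  have D10: "D 1 = D 0" using E3[of "2*k+2" x] by (simp add: D_def x_def)
  have Dev: "D (2*t+2) = D (2*t)" if "2*t+2 < 2*k+2" for t
  proof -
    have "D (2*t) - D (2*t+2) = l * (P l 1 t - P l 1 (Suc t)) - Q l 1 t"
      using E1[of t "2*k+2" x] that by (simp add: D_def x_def algebra_simps)
    also have "\<dots> = 0" using l0 by (simp add: PS)
    finally show ?thesis by simp
  qed
  have Dod: "D (2*t+3) = D (2*t+1)" if "2*t+3 < 2*k+2" for t
  proof -
    have "D (2*t+3) - D (2*t+1) = (l+1) * (Q l 1 (Suc t) - Q l 1 t) - P l 1 (Suc t)"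
      using E2[of t "2*k+2" x] that by (simp add: D_def x_def algebra_simps)
    also have "\<dots> = 0" using l1' by (simp add: QS)
    finally show ?thesis by simp
  qed
  have Dk: "D (2*k) = 0"
  proof -
    have "D (2*k) = l * P l 1 k - Q l 1 k" using E4[of k x] by (simp add: D_def x_def)
    also have "\<dots> = l * P l 1 (k+1)" using l0 by (simp add: PS field_simps)
    finally show ?thesis using end0 by simp
  qed
  have ind: "D (2*t) = D 0 \<and> D (2*t+1) = D 0" if "t \<le> k" for t
    using that
  proof (induction t)
    case 0 then show ?case using D10 by simp
  next
    case (Suc t)
    then have "D (2*t+2) = D 0" using Dev[of t] by simp
    moreover have "D (2*t+3) = D 0" using Dod[of t] Suc by simp
    ultimately show ?case by (simp add: numeral_eq_Suc)
  qed
  have D0: "D 0 = 0" using ind[of k] Dk by simp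
  have "\<forall>i<2*k+2. l * x i = rhs odd (2*k+2) x i"
  proof (intro allI impI)
    fix i assume i: "i < 2*k+2"
    obtain t r where "i = 2*t + r" "r < 2" by (metis mod_less_divisor mult_div_mod_eq zero_less_numeral)
    moreover then have "t \<le> k" using i by linarith
    ultimately have "D i = 0" using ind[of t] D0 by (cases r) (auto simp: numeral_2_eq_2)
    then show "l * x i = rhs odd (2*k+2) x i" by (simp add: D_def)
  qed
  moreover have "x 0 \<noteq> 0" by (simp add: x_def)
  ultimately show "\<exists>x. (\<exists>i<2*k+2. x i \<noteq> 0) \<and> (\<forall>i<2*k+2. l * x i = rhs odd (2*k+2) x i)"
    by (intro exI[of _ x]) auto
qed



lemma odd_char:
  fixes l :: real
  assumes l0: "l \<noteq> 0" and l1: "l \<noteq> -1"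
  shows "(\<exists>x. (\<exists>i<2*j+3. x i \<noteq> 0) \<and> (\<forall>i<2*j+3. l * x i = rhs bo (2*j+3) x i))
         \<longleftrightarrow> P l ((l+2)/(l+1)) (j+1) = 0"
proof
  have l1': "l + 1 \<noteq> 0" using l1 by linarith
  let ?q = "(l+2)/(l+1)"
  assume "\<exists>x. (\<exists>i<2*j+3. x i \<noteq> 0) \<and> (\<forall>i<2*j+3. l * x i = rhs bo (2*j+3) x i)"
  then obtain x i0 where i0: "i0 < 2*j+3" "x i0 \<noteq> 0" and eq: "\<And>i. i < 2*j+3 \<Longrightarrow> l * x i = rhs bo (2*j+3) x i"
    by blast
  have "l * x 0 = l * x 1" using O1[of "2*j+3" x] eq[of 0] eq[of 1] by simp
  then have x1: "x 1 = x 0" using l0 by simp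
  have "l * x 2 - l * x 1 = x 0 + x 1 - x 2" using O4[of "2*j+3" x] eq[of 2] eq[of 1] by simp
  then have "(l+1) * x 2 = (l+2) * x 0" using x1 by (simp add: algebra_simps)
  then have x2: "x 2 = x 0 * ?q" using l1' by (simp add: field_simps)
  have ind: "x (2*t+1) = x 0 * P l ?q t \<and> x (2*t+2) = x 0 * Q l ?q t" if "t \<le> j" for t
    using that
  proof (induction t)
    case 0
    then show ?case using x1 x2 by (simp add: numeral_2_eq_2)
  next
    case (Suc t)
    then have IH: "x (2*t+1) = x 0 * P l ?q t" "x (2*t+2) = x 0 * Q l ?q t" by auto
    have a: "l * x (2*t+1) - l * x (2*t+3) = x (2*t+2)"
      using O2[of t "2*j+3" x] eq[of "2*t+1"] eq[of "2*t+3"] Suc.prems by simp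
    have b: "l * x (2*t+4) - l * x (2*t+2) = x (2*t+2) + x (2*t+3) - x (2*t+4)"
      using O3[of t "2*j+3" x] eq[of "2*t+4"] eq[of "2*t+2"] Suc.prems by simp
    have c: "x (2*t+3) = x 0 * P l ?q (Suc t)"
    proof -
      have "x (2*t+3) = x (2*t+1) - x (2*t+2) / l" using a l0 by (simp add: field_simps)
      then show ?thesis using IH by (simp add: PS algebra_simps)
    qed
    have d: "x (2*t+4) = x 0 * Q l ?q (Suc t)"
    proof -
      have "(l+1) * x (2*t+4) = (l+1) * x (2*t+2) + x (2*t+3)" using b by (simp add: algebra_simps)
      then have "x (2*t+4) = x (2*t+2) + x (2*t+3) / (l+1)" using l1' by (simp add: field_simps)
      then show ?thesis using IH c by (simp add: QS algebra_simps)
    qed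
    show ?case using c d by (simp add: numeral_eq_Suc)
  qed
  have e: "l * x (2*j+1) = x (2*j+2)" using O5[of j x] eq[of "2*j+1"] by simp
  have x0: "x 0 \<noteq> 0"
  proof
    assume z: "x 0 = 0"
    have "x i0 = 0"
    proof (cases "i0 = 0")
      case True then show ?thesis using z by simp
    next
      case False
      obtain t r where tr: "i0 = 2*t + r + 1" "r < 2" using False
        by (metis Suc_eq_plus1 add.commute mod_less_divisor mult_div_mod_eq not0_implies_Suc zero_less_numeral)
      moreover then have "t \<le> j" using i0 by linarith
      ultimately show ?thesis using ind[of t] z by (cases r) (auto simp: numeral_2_eq_2 numeral_3_eq_3)
    qed
    with i0 show False by simp
  qed
  have "x 0 * (l * P l ?q j - Q l ?q j) = 0" using e ind[of j] by (simp add: algebra_simps)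
  then have "l * P l ?q j = Q l ?q j" using x0 by simp
  then show "P l ?q (j+1) = 0" using l0 by (simp add: PS field_simps)
next
  have l1': "l + 1 \<noteq> 0" using l1 by linarith
  let ?q = "(l+2)/(l+1)"
  assume end0: "P l ?q (j+1) = 0"
  define x where "x i = (if i = 0 then 1 else if odd i then P l ?q ((i-1) div 2) else Q l ?q ((i-2) div 2))" for i
  define D where "D i = l * x i - rhs bo (2*j+3) x i" for i
  have xodd: "x (2*t+1) = P l ?q t" for t by (simp add: x_def)
  have xev: "x (2*t+2) = Q l ?q t" for t by (simp add: x_def)
  have xodd3: "x (2*t+3) = P l ?q (Suc t)" for t by (simp add: x_def)
  have xev4: "x (2*t+4) = Q l ?q (Suc t)" for t by (simp add: x_def)
  have D10: "D 1 = D 0" using O1[of "2*j+3" x] by (simp add: D_def x_def)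
  have D21: "D 2 = D 1"
  proof -
    have "D 2 - D 1 = l * (x 2 - x 1) - (x 0 + x 1 - x 2)" using O4[of "2*j+3" x] by (simp add: D_def algebra_simps)
    also have "\<dots> = (l + 1) * ?q - (l + 2)" using xev[of 0] xodd[of 0] by (simp add: x_def algebra_simps add_divide_distrib[symmetric])
    also have "\<dots> = 0" using l1' by simp
    finally show ?thesis by simp
  qed
  have Dod: "D (2*t+3) = D (2*t+1)" if "2*t+3 < 2*j+3" for t
  proof -
    have "D (2*t+1) - D (2*t+3) = l * (P l ?q t - P l ?q (Suc t)) - Q l ?q t"
      using O2[of t "2*j+3" x] that xodd[of t] xodd3[of t] xev[of t]
      by (simp add: D_def algebra_simps)
    also have "\<dots> = 0" using l0 by (simp add: PS)
    finally show ?thesis by simp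
  qed
  have Dev: "D (2*t+4) = D (2*t+2)" if "2*t+4 < 2*j+3" for t
  proof -
    have "D (2*t+4) - D (2*t+2) = (l+1) * (Q l ?q (Suc t) - Q l ?q t) - P l ?q (Suc t)"
      using O3[of t "2*j+3" x] that xodd3[of t] xev[of t] xev4[of t]
      by (simp add: D_def algebra_simps)
    also have "\<dots> = 0" using l1' by (simp add: QS)
    finally show ?thesis by simp
  qed
  have Dj: "D (2*j+1) = 0"
  proof -
    have "D (2*j+1) = l * P l ?q j - Q l ?q j" using O5[of j x] xodd[of j] xev[of j] by (simp add: D_def)
    also have "\<dots> = l * P l ?q (j+1)" using l0 by (simp add: PS field_simps)
    finally show ?thesis using end0 by simp
  qed
  have ind: "D (2*t+1) = D 0 \<and> D (2*t+2) = D 0" if "t \<le> j" for t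
    using that
  proof (induction t)
    case 0 then show ?case using D10 D21 by (simp add: numeral_2_eq_2)
  next
    case (Suc t)
    then have "D (2*t+3) = D 0" using Dod[of t] by simp
    moreover have "D (2*t+4) = D 0" using Dev[of t] Suc by simp
    ultimately show ?case by (simp add: numeral_eq_Suc)
  qed
  have D0: "D 0 = 0" using ind[of j] Dj by simp
  have "\<forall>i<2*j+3. l * x i = rhs bo (2*j+3) x i"
  proof (intro allI impI)
    fix i assume i: "i < 2*j+3"
    have "D i = 0"
    proof (cases "i = 0")
      case True then show ?thesis using D0 by simp
    next
      case False
      obtain t r where tr: "i = 2*t + r + 1" "r < 2" using False
        by (metis Suc_eq_plus1 add.commute mod_less_divisor mult_div_mod_eq not0_implies_Suc zero_less_numeral)
      moreover then have "t \<le> j" using i by linarith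
      ultimately show ?thesis using ind[of t] D0 by (cases r) (auto simp: numeral_2_eq_2 numeral_3_eq_3)
    qed
    then show "l * x i = rhs bo (2*j+3) x i" by (simp add: D_def)
  qed
  moreover have "x 0 \<noteq> 0" by (simp add: x_def)
  moreover have "(0::nat) < 2*j+3" by simp
  ultimately show "\<exists>x. (\<exists>i<2*j+3. x i \<noteq> 0) \<and> (\<forall>i<2*j+3. l * x i = rhs bo (2*j+3) x i)"
    by blast
qed



fun V :: "real \<Rightarrow> nat \<Rightarrow> real" where
  "V c 0 = 0"
| "V c (Suc 0) = 1"
| "V c (Suc (Suc n)) = 2*c*V c (Suc n) - V c n"

definition cc :: "real \<Rightarrow> real" where "cc l = 1 - 1/(2*l*(l+1))"

definition Fodd :: "nat \<Rightarrow> real \<Rightarrow> real" where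
  "Fodd k l = V (cc l) (k+1) - (1 + 1/l) * V (cc l) k"

definition Feven :: "nat \<Rightarrow> real \<Rightarrow> real" where
  "Feven k l = (1 - 1/l) * V (cc l) (k+1) - V (cc l) k"

lemma cc_eq: assumes "l \<noteq> 0" "l + 1 \<noteq> 0" shows "cc l = 1 - 1/(2*l) + 1/(2*(l+1))"
proof -
  have "1/(2*l) - 1/(2*(l+1)) = ((l+1) - l)/(2*l*(l+1))" using assms by (simp add: divide_simps)
  then show ?thesis unfolding cc_def by simp
qed

lemma nz4: fixes l :: real assumes "l \<noteq> 0" "l + 1 \<noteq> 0" shows "l*4 + l*(l*4) \<noteq> 0"
proof -
  have "l*4 + l*(l*4) = 4*(l*(l+1))" by (simp add: algebra_simps)
  then show ?thesis using assms by simp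
qed

lemma P_rec:
  assumes l0: "l \<noteq> 0" and l1: "l \<noteq> -1"
  shows "P l q0 (Suc (Suc t)) = 2 * cc l * P l q0 (Suc t) - P l q0 t"
proof -
  have l1': "l + 1 \<noteq> 0" using l1 by linarith
  have q: "Q l q0 t = l * (P l q0 t - P l q0 (Suc t))" using l0 by (simp add: PS field_simps)
  have "P l q0 (Suc (Suc t)) = P l q0 (Suc t) - (Q l q0 t + P l q0 (Suc t)/(l+1)) / l"
    by (simp add: PS QS[of l q0 t])
  also have "\<dots> = 2 * cc l * P l q0 (Suc t) - P l q0 t"
    unfolding q cc_eq[OF l0 l1'] using l0 l1' nz4[OF l0 l1'] by (simp add: field_split_simps)
  finally show ?thesis .
qed

lemma lin_rec:
  assumes rec: "\<And>t. x (Suc (Suc t)) = 2 * c * x (Suc t) - x t"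
  shows "x (Suc j) = x 1 * V c (Suc j) - x 0 * V c j"
proof -
  have "x (Suc j) = x 1 * V c (Suc j) - x 0 * V c j \<and> x (Suc (Suc j)) = x 1 * V c (Suc (Suc j)) - x 0 * V c (Suc j)"
  proof (induction j)
    case 0 then show ?case using rec[of 0] by simp
  next
    case (Suc j)
    have e1: "x (Suc(Suc(Suc j))) = 2*c*x(Suc(Suc j)) - x(Suc j)" by (rule rec)
    have e2: "V c (Suc(Suc(Suc j))) = 2*c*V c (Suc(Suc j)) - V c (Suc j)" by (rule V.simps(3))
    from Suc.IH have i1: "x (Suc j) = x 1 * V c (Suc j) - x 0 * V c j"
      and i2: "x (Suc (Suc j)) = x 1 * V c (Suc (Suc j)) - x 0 * V c (Suc j)" by auto
    show ?case unfolding e1 e2 i1 i2 by (simp add: algebra_simps)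
  qed
  then show ?thesis by simp
qed

lemma Feven_P:
  assumes l0: "l \<noteq> 0" and l1: "l \<noteq> -1"
  shows "P l 1 (k+1) = Feven k l"
  using lin_rec[of "P l 1" "cc l" k] P_rec[OF l0 l1] by (simp add: Feven_def PS)

lemma Fodd_P:
  assumes l0: "l \<noteq> 0" and l1: "l \<noteq> -1"
  shows "P l ((l+2)/(l+1)) (j+1) = Fodd (j+1) l"
proof -
  have l1': "l + 1 \<noteq> 0" using l1 by linarith
  have "P l ((l+2)/(l+1)) (Suc j) = P l ((l+2)/(l+1)) 1 * V (cc l) (Suc j) - V (cc l) j"
    using lin_rec[of "P l ((l+2)/(l+1))" "cc l" j] P_rec[OF l0 l1] by simp
  moreover have "P l ((l+2)/(l+1)) 1 = 2 * cc l - 1 - 1/l"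
  proof -
    have "2/l - 1/(l+1) = (2*(l+1) - l)/(l*(l+1))" using l0 l1' by (simp add: divide_simps)
    then have a: "(l+2)/(l+1)/l = 2/l - 1/(l+1)" by simp
    have b: "1/(2*l) = (1/l)/2" "1/(2*(l+1)) = (1/(l+1))/2" by (simp, metis divide_divide_eq_left mult.commute)
    have "P l ((l+2)/(l+1)) 1 = 1 - (l+2)/(l+1)/l" using PS[of l "(l+2)/(l+1)" 0] by simp
    also have "\<dots> = 1 - 2/l + 1/(l+1)" unfolding a by simp
    also have "\<dots> = 2 * cc l - 1 - 1/l"
    proof -
      have g: "\<And>u v::real. 1 - 2*u + v = 2*(1 - u/2 + v/2) - 1 - u" by simp
      have h: "2/l = 2*(1/l)" by simp
      show ?thesis unfolding cc_eq[OF l0 l1'] b h by (rule g)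
    qed
    finally show ?thesis .
  qed
  ultimately have "P l ((l+2)/(l+1)) (Suc j) = (2 * cc l - 1 - 1/l) * V (cc l) (Suc j) - V (cc l) j"
    by (simp only: mult.commute)
  then show ?thesis by (simp add: Fodd_def algebra_simps)
qed

lemma antireg_even: "length (antireg_string (2*k+2)) = 2*k+2" "\<forall>i<2*k+2. antireg_string (2*k+2) ! i = odd i"
  by (auto simp: antireg_string_def simp del: upt_Suc)

lemma antireg_odd: "length (antireg_string (2*j+3)) = 2*j+3" "\<forall>i<2*j+3. antireg_string (2*j+3) ! i = bo i"
  by (auto simp: antireg_string_def bo_def simp del: upt_Suc)

lemma ev_even:
  assumes l0: "l \<noteq> 0" and l1: "l \<noteq> -1"
  shows "eigenvalue (antireg_adj (2*k+2)) l \<longleftrightarrow> Feven k l = 0"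
  unfolding antireg_adj_def eig_char[OF antireg_even] even_char[OF l0 l1] Feven_P[OF l0 l1] ..

lemma ev_odd:
  assumes l0: "l \<noteq> 0" and l1: "l \<noteq> -1"
  shows "eigenvalue (antireg_adj (2*j+3)) l \<longleftrightarrow> Fodd (j+1) l = 0"
  unfolding antireg_adj_def eig_char[OF antireg_odd] odd_char[OF l0 l1] Fodd_P[OF l0 l1] ..

lemma fin_eig: "finite {x. eigenvalue (antireg_adj n) x \<and> R x}"
proof -
  have A: "antireg_adj n \<in> carrier_mat (length (antireg_string n)) (length (antireg_string n))"
    by (simp add: antireg_adj_def adj_matrix_def)
  have "char_poly (antireg_adj n) \<noteq> 0" using degree_monic_char_poly[OF A] by auto
  then have "finite {x. poly (char_poly (antireg_adj n)) x = 0}" by (rule poly_roots_finite)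
  then show ?thesis by (rule rev_finite_subset) (auto simp: eigenvalue_root_char_poly[OF A])
qed



lemma V_m1: "V (-1) n = (-1)^(n+1) * real n"
proof -
  have "V (-1) n = (-1)^(n+1) * real n \<and> V (-1) (Suc n) = (-1)^(n+2) * real (Suc n)"
  proof (induction n)
    case 0 then show ?case by simp
  next
    case (Suc n)
    then show ?case by (simp add: algebra_simps)
  qed
  then show ?thesis by simp
qed

lemma V_le_m1:
  assumes c: "c \<le> -1"
  shows "(-1)^(n+1) * V c n \<ge> real n \<and> (-1)^(n+2) * V c (Suc n) - (-1)^(n+1) * V c n \<ge> 1"
proof (induction n)
  case 0 then show ?case by simp
next
  case (Suc n)
  define z where "z m = (-1)^(m+1) * V c m" for m
  have IH: "z n \<ge> real n" "z (Suc n) - z n \<ge> 1" using Suc unfolding z_def by auto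
  have rec: "z (Suc (Suc n)) = -2*c * z (Suc n) - z n"
    unfolding z_def by (simp add: algebra_simps)
  have "z (Suc n) \<ge> 0" using IH by linarith
  moreover have "-c - 1 \<ge> 0" using c by simp
  ultimately have "(-c - 1) * z (Suc n) \<ge> 0" by simp
  then have "-2*c * z (Suc n) \<ge> 2 * z (Suc n)" by (simp add: algebra_simps)
  then have "z (Suc (Suc n)) - z (Suc n) \<ge> 1" using rec IH by linarith
  moreover have "z (Suc n) \<ge> real (Suc n)" using IH by simp
  ultimately show ?case unfolding z_def by (simp add: algebra_simps)
qed



lemma trig_id: "2 * cos p * sin a - sin (a - p) = sin (a + (p::real))"
  by (simp add: sin_add sin_diff algebra_simps)


lemma V_sin:
  assumes s: "sin p \<noteq> 0"
  shows "V (cos p) n * sin p = sin (real n * p)"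
proof -
  have "V (cos p) n * sin p = sin (real n * p) \<and> V (cos p) (Suc n) * sin p = sin (real (Suc n) * p)"
  proof (induction n)
    case 0 then show ?case by simp
  next
    case (Suc n)
    let ?a = "real (Suc n) * p"
    have e1: "real (Suc (Suc n)) * p = ?a + p" by (simp add: algebra_simps)
    have e2: "real n * p = ?a - p" by (simp add: algebra_simps)
    have "V (cos p) (Suc (Suc n)) * sin p = 2 * cos p * (V (cos p) (Suc n) * sin p) - V (cos p) n * sin p"
      by (simp add: algebra_simps)
    also have "\<dots> = 2 * cos p * sin ?a - sin (?a - p)" using Suc e2 by simp
    also have "\<dots> = sin (?a + p)" by (rule trig_id)
    finally show ?case using Suc e1 by simp
  qed
  then show ?thesis by simp
qed

lemma sin_shift: "sin (x + real m * pi) = (-1)^m * sin x"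
  by (simp add: sin_add)

lemma Vsign:
  assumes k: "k \<ge> 1" and c: "c < cos (pi - pi / real k)"
  shows "(-1)^(k+1) * V c k > 0"
proof (cases "c \<le> -1")
  case True
  then have "(-1)^(k+1) * V c k \<ge> real k" using V_le_m1[of c k] by simp
  then show ?thesis using k by simp
next
  case False
  show ?thesis
  proof (cases "k = 1")
    case True then show ?thesis by simp
  next
    case False
    then have k2: "k \<ge> 2" using k by simp
    obtain m where m: "k = Suc m" using k by (cases k) auto
    have pk: "0 < pi / real k" "pi / real k \<le> pi" using k2 pi_gt_zero
      by (auto simp: field_simps)
    define ck where "ck = cos (pi - pi / real k)"
    have ck1: "ck \<le> 1" "-1 \<le> ck" by (simp_all add: ck_def)
    have cm1: "-1 < c" using \<open>\<not> c \<le> -1\<close> by simp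
    have c1: "c < 1" using c ck1 unfolding ck_def by linarith
    define p where "p = arccos c"
    have p: "0 < p" "p < pi" using arccos_lt_bounded[OF cm1 c1] by (simp_all add: p_def)
    have cp: "cos p = c" using cm1 c1 by (simp add: p_def)
    have "arccos ck = pi - pi / real k" unfolding ck_def using pk by (intro arccos_cos) auto
    moreover have "arccos ck < arccos c" using arccos_less_arccos[of c ck] cm1 c ck1 by (simp add: ck_def)
    ultimately have pgt: "pi - pi / real k < p" by (simp add: p_def)
    define th where "th = real k * p - real m * pi"
    have th0: "0 < th"
    proof -
      have "real k * (pi - pi / real k) < real k * p" using pgt k by simp
      moreover have "real k * (pi - pi / real k) = real k * pi - pi" using k by (simp add: field_simps)
      ultimately show ?thesis unfolding th_def using m by (simp add: algebra_simps)
    qed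
    have thpi: "th < pi"
    proof -
      have "real k * p < real k * pi" using p k by simp
      then show ?thesis unfolding th_def using m by (simp add: algebra_simps)
    qed
    have sp: "sin p > 0" using sin_gt_zero p by simp
    have "V c k * sin p = sin (real k * p)" using V_sin[of p k] sp cp by simp
    also have "\<dots> = sin (th + real m * pi)" by (simp add: th_def)
    also have "\<dots> = (-1)^m * sin th" by (rule sin_shift)
    finally have "V c k * sin p = (-1)^m * sin th" .
    moreover have "((-1::real)^m) * (-1)^m = 1"
    proof -
      have "((-1::real)^m) * (-1)^m = (-1)^(m+m)" by (simp add: power_add)
      then show ?thesis by simp
    qed
    moreover have "((-1::real)^(k+1)) = (-1)^m" using m by simp
    ultimately have "(-1)^(k+1) * V c k * sin p = sin th"
      by (metis mult.assoc mult.left_neutral)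
    moreover have "sin th > 0" using sin_gt_zero th0 thpi by simp
    ultimately have "(-1)^(k+1) * V c k * sin p > 0" by simp
    then show ?thesis using sp by (metis mult_pos_pos zero_less_mult_pos2 mult.commute)
  qed
qed

lemma Vck:
  assumes k2: "k \<ge> 2"
  shows "V (cos (pi - pi / real k)) k = 0" "V (cos (pi - pi / real k)) (k+1) = (-1)^(k+1)"
proof -
  have kpos: "real k > 0" using k2 by simp
  have pk: "0 < pi / real k" "pi / real k < pi" using k2 pi_gt_zero kpos
    by (auto simp: field_simps)
  let ?p = "pi - pi / real k"
  have sp: "sin ?p = sin (pi / real k)" by simp
  have sp0: "sin (pi / real k) > 0" using sin_gt_zero pk by simp
  obtain m where m: "k = Suc m" using k2 by (cases k) auto
  have "real k * ?p = real m * pi" using kpos m by (simp add: field_simps)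
  then have "V (cos ?p) k * sin ?p = 0" using V_sin[of ?p k] sp sp0 by simp
  then show "V (cos ?p) k = 0" using sp sp0 by simp
  have "real (k+1) * ?p = - (pi / real k) + real k * pi" using kpos by (simp add: field_simps)
  then have "V (cos ?p) (k+1) * sin ?p = (-1)^k * sin (- (pi / real k))"
    using V_sin[of ?p "k+1"] sp sp0 sin_shift[of "- (pi / real k)" k] by simp
  then have "V (cos ?p) (k+1) * sin (pi / real k) = (-1)^(k+1) * sin (pi / real k)" using sp by simp
  then have "(V (cos ?p) (k+1) - (-1)^(k+1)) * sin (pi / real k) = 0" by (simp only: left_diff_distrib)
  then show "V (cos ?p) (k+1) = (-1)^(k+1)" using sp0 by simp
qed



lemma cc_sym: "cc (-1-l) = cc l"
  unfolding cc_def by (simp add: algebra_simps)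

lemma cc_mono: assumes "0 < a" "a < b" shows "cc a < cc b"
proof -
  have "a*(a+1) < b*(b+1)" using assms by (simp add: mult_strict_mono)
  moreover have "0 < a*(a+1)" using assms by simp
  ultimately have "1/(2*(b*(b+1))) < 1/(2*(a*(a+1)))" by (simp add: frac_less2)
  then show ?thesis unfolding cc_def by (simp add: mult.assoc)
qed

definition lstar :: real where "lstar = (sqrt 2 - 1)/2"

lemma lstar_pos: "0 < lstar" and lstar_half: "lstar < 1/2"
proof -
  have "1 < sqrt (2::real)" by simp
  then show "0 < lstar" by (simp add: lstar_def)
  have "sqrt (2::real) < sqrt 4" by (rule real_sqrt_less_mono) simp
  then have "sqrt (2::real) < 2" by simp
  then show "lstar < 1/2" by (simp add: lstar_def)
qed

lemma lstar_s: "lstar * (lstar + 1) = 1/4"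
proof -
  have "lstar * (lstar + 1) = (sqrt 2 - 1) * (sqrt 2 + 1) / 4" by (simp add: lstar_def field_simps)
  also have "(sqrt 2 - 1) * (sqrt 2 + 1) = (sqrt 2)^2 - (1::real)" by (simp add: algebra_simps power2_eq_square)
  finally show ?thesis by simp
qed

lemma cc_lstar: "cc lstar = -1"
proof -
  have "2*lstar*(lstar+1) = 2*(lstar*(lstar+1))" by (simp only: mult.assoc)
  also have "\<dots> = 1/2" using lstar_s by simp
  finally have h: "2*lstar*(lstar+1) = 1/2" .
  show ?thesis unfolding cc_def h by simp
qed

lemma aux_q: "0 < (x::real) \<Longrightarrow> x \<le> 1/4 \<Longrightarrow> 2 \<le> 1/(2*x)"
  by (simp add: field_simps)

lemma cc_gap: assumes "0 < l" "l \<le> lstar" shows "cc l \<le> -1"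
proof -
  have "l*(l+1) \<le> lstar*(lstar+1)" using assms by (simp add: mult_mono)
  then have s: "l*(l+1) \<le> 1/4" using lstar_s by simp
  have "0 < l*(l+1)" using assms by simp
  then have "2 \<le> 1/(2*(l*(l+1)))" using s aux_q by blast
  then show ?thesis unfolding cc_def by (simp add: mult.assoc)
qed

lemma cc_gap_neg: assumes "-1-lstar \<le> l" "l < -1" shows "cc l \<le> -1"
  using cc_gap[of "-1-l"] assms cc_sym[of l] by simp

lemma Feven_Fodd: assumes "l \<noteq> 0" shows "Feven k l = (1 - 1/l) * Fodd k l - V (cc l) k / l^2"
  unfolding Feven_def Fodd_def using assms by (simp add: field_simps power2_eq_square)

lemma m1sq: "((-1::real)^k) * (-1)^k = 1"
proof -
  have "((-1::real)^k) * (-1)^k = (-1)^(k+k)" by (simp add: power_add)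
  then show ?thesis by simp
qed

lemma Fodd_gap:
  assumes k: "k \<ge> 1" and c: "cc l \<le> -1" and l: "1 + 1/l > 0"
  shows "(-1)^k * Fodd k l > 0"
proof -
  have a: "(-1)^(k+2) * V (cc l) (k+1) \<ge> real (k+1)" using V_le_m1[OF c, of "k+1"] by simp
  have b: "(-1)^(k+1) * V (cc l) k \<ge> real k" using V_le_m1[OF c, of k] by simp
  have "(-1)^k * Fodd k l = (-1)^(k+2) * V (cc l) (k+1) + (1 + 1/l) * ((-1)^(k+1) * V (cc l) k)"
    unfolding Fodd_def by (simp add: algebra_simps)
  moreover have "(1 + 1/l) * ((-1)^(k+1) * V (cc l) k) \<ge> 0"
  proof -
    define X where "X = (-1)^(k+1) * V (cc l) k"
    have "X \<ge> 0" using b unfolding X_def by linarith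
    then have "(1 + 1/l) * X \<ge> 0" using l by simp
    then show ?thesis unfolding X_def .
  qed
  ultimately show ?thesis using a by linarith
qed

lemma Fodd_gap_pos: "k \<ge> 1 \<Longrightarrow> 0 < l \<Longrightarrow> l \<le> lstar \<Longrightarrow> (-1)^k * Fodd k l > 0"
  using Fodd_gap cc_gap by (simp add: add_pos_pos)

lemma Fodd_gap_neg: assumes "k \<ge> 1" "-1-lstar \<le> l" "l < -1" shows "(-1)^k * Fodd k l > 0"
proof -
  have "1/l > -1" using assms(3) by (simp add: field_simps)
  then show ?thesis using Fodd_gap[OF assms(1) cc_gap_neg[OF assms(2,3)]] by simp
qed

lemma Feven_lstar: assumes k: "k \<ge> 1" shows "(-1)^k * Feven k lstar < 0"
proof -
  have "(-1)^k * Feven k lstar = (1 - 1/lstar) * real (k+1) + real k"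
    unfolding Feven_def cc_lstar V_m1 using m1sq[of k] by (simp add: algebra_simps)
  moreover have "1/lstar > 2" using lstar_pos lstar_half by (simp add: field_simps)
  moreover have "(1 - 1/lstar) * real (k+1) \<le> - real (k+1)"
  proof -
    have "1 - 1/lstar \<le> -1" using \<open>1/lstar > 2\<close> by simp
    then show ?thesis by (metis mult_minus_left mult_1 mult_right_mono of_nat_0_le_iff)
  qed
  ultimately show ?thesis by simp
qed



lemma V_cont: assumes "continuous_on S f" shows "continuous_on S (\<lambda>x. V (f x) n)"
proof -
  have "continuous_on S (\<lambda>x. V (f x) n) \<and> continuous_on S (\<lambda>x. V (f x) (Suc n))"
  proof (induction n)
    case 0 then show ?case by (simp add: continuous_on_const)
  next
    case (Suc n)
    then show ?case using assms by (auto intro!: continuous_intros)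
  qed
  then show ?thesis by simp
qed

lemma cc_cont: assumes "\<forall>x\<in>S. x \<noteq> 0 \<and> x \<noteq> -1" shows "continuous_on S cc"
proof -
  have "continuous_on S (\<lambda>l. 1 - 1/(2*l*(l+1)))"
    using assms by (intro continuous_intros) (auto simp: add_eq_0_iff)
  then show ?thesis unfolding cc_def[abs_def] .
qed

lemma Fodd_cont: assumes "\<forall>x\<in>S. x \<noteq> 0 \<and> x \<noteq> -1" shows "continuous_on S (\<lambda>l. (-1)^k * Fodd k l)"
  unfolding Fodd_def using assms
  by (intro continuous_intros V_cont cc_cont) auto

lemma Feven_cont: assumes "\<forall>x\<in>S. x \<noteq> 0 \<and> x \<noteq> -1" shows "continuous_on S (\<lambda>l. (-1)^k * Feven k l)"
  unfolding Feven_def using assms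
  by (intro continuous_intros V_cont cc_cont) auto

lemma witness:
  assumes k: "k \<ge> 1"
  shows "\<exists>l0>0. (-1)^k * Fodd k l0 < 0 \<and> (-1)^k * Fodd k (-1-l0) < 0 \<and> (-1)^k * Feven k (-1-l0) < 0
     \<and> (\<forall>l. 0 < l \<and> l < l0 \<longrightarrow> (-1)^(k+1) * V (cc l) k > 0)"
proof (cases "k = 1")
  case True
  have c2: "cc 2 = 11/12" by (simp add: cc_def)
  have c3: "cc (-1-2) = 11/12" using c2 cc_sym[of 2] by simp
  have "(-1)^k * Fodd k 2 < 0" using True c2 by (simp add: Fodd_def numeral_2_eq_2)
  moreover have "(-1)^k * Fodd k (-1-2) < 0" using True c3 by (simp add: Fodd_def numeral_2_eq_2)
  moreover have "(-1)^k * Feven k (-1-2) < 0" using True c3 by (simp add: Feven_def numeral_2_eq_2)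
  moreover have "\<forall>l. 0 < l \<and> l < 2 \<longrightarrow> (-1)^(k+1) * V (cc l) k > 0" using True by simp
  ultimately show ?thesis by (intro exI[of _ 2]) simp
next
  case False
  then have k2: "k \<ge> 2" using k by simp
  define ck where "ck = cos (pi - pi / real k)"
  have ck0: "ck \<le> 0"
  proof -
    have "real k \<ge> 2" using k2 by simp
    then have "pi / real k \<le> pi / 2" by (intro divide_left_mono) auto
    moreover have "0 \<le> pi / real k" by simp
    moreover have "- (pi/2) \<le> 0" by simp
    ultimately have "0 \<le> cos (pi / real k)" by (intro cos_ge_zero) linarith+
    then show ?thesis by (simp add: ck_def)
  qed
  define s0 where "s0 = 1 / (2 * (1 - ck))"
  have s0: "0 < s0" using ck0 by (simp add: s0_def)
  define t where "t = 1 + 4 * s0"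
  have t1: "1 < t" using s0 by (simp add: t_def)
  define l0 where "l0 = (sqrt t - 1) / 2"
  have st: "1 < sqrt t" using t1 by simp
  have l0: "0 < l0" using st by (simp add: l0_def)
  have "l0 * (l0 + 1) = (sqrt t - 1) * (sqrt t + 1) / 4" by (simp add: l0_def field_simps)
  also have "(sqrt t - 1) * (sqrt t + 1) = (sqrt t)^2 - 1" by (simp add: algebra_simps power2_eq_square)
  also have "(sqrt t)^2 = t" using t1 by simp
  finally have ls: "l0 * (l0 + 1) = s0" by (simp add: t_def)
  have "cc l0 = 1 - 1 / (2 * s0)" unfolding cc_def ls[symmetric] by (simp add: mult.assoc)
  also have "\<dots> = ck" using ck0 by (simp add: s0_def field_simps)
  finally have ccl0: "cc l0 = ck" .
  have ccm: "cc (-1-l0) = ck" using ccl0 cc_sym by simp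
  have V0: "V ck k = 0" and V1: "V ck (k+1) = (-1)^(k+1)" using Vck[OF k2] by (simp_all add: ck_def)
  have "(-1)^k * Fodd k l0 = - 1" unfolding Fodd_def ccl0 V0 V1 using m1sq[of k] by simp
  moreover have "(-1)^k * Fodd k (-1-l0) = - 1" unfolding Fodd_def ccm V0 V1 using m1sq[of k] by simp
  moreover have "(-1)^k * Feven k (-1-l0) = - (1 - 1/(-1-l0))" unfolding Feven_def ccm V0 V1 using m1sq[of k]
    by (simp add: algebra_simps)
  moreover have "1 - 1/(-1-l0) > 0" using l0 by (simp add: field_simps)
  moreover have "\<forall>l. 0 < l \<and> l < l0 \<longrightarrow> (-1)^(k+1) * V (cc l) k > 0"
  proof (intro allI impI)
    fix l assume "0 < l \<and> l < l0"
    then have "cc l < cc l0" using cc_mono by blast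
    then show "(-1)^(k+1) * V (cc l) k > 0" using Vsign[of k "cc l"] k ccl0 by (simp add: ck_def)
  qed
  ultimately show ?thesis using l0 by (intro exI[of _ l0]) simp
qed



lemma Ge_formula: assumes "l \<noteq> 0"
  shows "(-1)^k * Feven k l = (1-1/l) * ((-1)^k * Fodd k l) + ((-1)^(k+1) * V (cc l) k) / l^2"
  unfolding Feven_Fodd[OF assms] by (simp add: algebra_simps)

lemma Ge_pos:
  assumes l: "l \<noteq> 0" and a: "(1-1/l) * ((-1)^k * Fodd k l) \<ge> 0" and b: "(-1)^(k+1) * V (cc l) k > 0"
  shows "(-1)^k * Feven k l > 0"
proof -
  define X where "X = (-1)^(k+1) * V (cc l) k"
  have "X / l^2 > 0" using b l unfolding X_def[symmetric] by (intro divide_pos_pos) auto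
  then have "((-1)^(k+1) * V (cc l) k) / l^2 > 0" unfolding X_def .
  then show ?thesis unfolding Ge_formula[OF l] using a by linarith
qed

theorem proposition2p1:
  fixes n :: nat
  assumes "odd n" and "n \<ge> 3"
  shows "mu_minus (antireg_adj (n+1)) \<le> mu_minus (antireg_adj n)
     \<and> mu_plus (antireg_adj (n+1)) \<le> mu_plus (antireg_adj n)"
proof -
  obtain j where nj: "n = 2*j+3"
  proof -
    have "n = 2*(n div 2) + 1" using assms(1) by simp
    moreover have "n div 2 \<ge> 1" using assms(2) by simp
    ultimately have "n = 2*(n div 2 - 1) + 3" by simp
    then show ?thesis using that by blast
  qed
  define k where "k = j + 1"
  have k1: "k \<ge> 1" by (simp add: k_def)
  have n1: "n + 1 = 2*k+2" by (simp add: nj k_def)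
  have evo: "eigenvalue (antireg_adj n) l \<longleftrightarrow> (-1)^k * Fodd k l = 0" if "l \<noteq> 0" "l \<noteq> -1" for l
    using ev_odd[OF that, of j] by (simp add: nj k_def)
  have eve: "eigenvalue (antireg_adj (n+1)) l \<longleftrightarrow> (-1)^k * Feven k l = 0" if "l \<noteq> 0" "l \<noteq> -1" for l
    using ev_even[OF that, of k] unfolding n1 by simp
  obtain l0 where l0: "l0 > 0" "(-1)^k * Fodd k l0 < 0" "(-1)^k * Fodd k (-1-l0) < 0"
    "(-1)^k * Feven k (-1-l0) < 0" and Vpos0: "\<And>l. 0 < l \<Longrightarrow> l < l0 \<Longrightarrow> (-1)^(k+1) * V (cc l) k > 0"
    using witness[OF k1] by blast
  have lsl0: "lstar < l0"
  proof (rule ccontr)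
    assume "\<not> lstar < l0"
    then have "(-1)^k * Fodd k l0 > 0" using Fodd_gap_pos[OF k1 l0(1)] by simp
    with l0(2) show False by simp
  qed
  have Vpos: "(-1)^(k+1) * V (cc l) k > 0" if "0 < l \<and> l < l0 \<or> -1-l0 < l \<and> l < -1" for l
  proof (cases "0 < l \<and> l < l0")
    case True then show ?thesis using Vpos0 by blast
  next
    case False
    then have "0 < -1-l" "-1-l < l0" using that by auto
    then show ?thesis using Vpos0[of "-1-l"] cc_sym[of l] by simp
  qed
  define SP where "SP m = {x. eigenvalue (antireg_adj m) x \<and> x > 0}" for m
  have finSP: "finite (SP m)" for m unfolding SP_def by (rule fin_eig)
  obtain r where r: "lstar \<le> r" "r \<le> l0" "(-1)^k * Fodd k r = 0"
  proof -
    have "continuous_on {lstar..l0} (\<lambda>l. (-1)^k * Fodd k l)"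
      using lstar_pos by (intro Fodd_cont) auto
    moreover have "(-1)^k * Fodd k lstar > 0" using Fodd_gap_pos[OF k1 lstar_pos] by simp
    ultimately show ?thesis using IVT2'[of "\<lambda>l. (-1)^k * Fodd k l" l0 0 lstar] l0(2) lsl0 that by force
  qed
  have rSP: "r \<in> SP n" unfolding SP_def using r lstar_pos evo[of r] by auto
  define th where "th = Min (SP n)"
  have thSP: "th \<in> SP n" unfolding th_def using finSP rSP by (intro Min_in) auto
  have thr: "th \<le> r" unfolding th_def using finSP rSP by simp
  have th0: "th > 0" and thF: "(-1)^k * Fodd k th = 0" using thSP evo[of th] by (auto simp: SP_def)
  have thl0: "th < l0" using thr r(2) thF l0(2) by (cases "th = l0") auto
  have thls: "lstar < th"
  proof (rule ccontr)
    assume "\<not> lstar < th"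
    then have "(-1)^k * Fodd k th > 0" using Fodd_gap_pos[OF k1 th0] by simp
    with thF show False by simp
  qed
  have Gth: "(-1)^k * Feven k th > 0"
    using Ge_pos[of th k] th0 thF Vpos[of th] thl0 by simp
  obtain r' where r': "lstar \<le> r'" "r' \<le> th" "(-1)^k * Feven k r' = 0"
  proof -
    have "continuous_on {lstar..th} (\<lambda>l. (-1)^k * Feven k l)"
      using lstar_pos by (intro Feven_cont) auto
    then show ?thesis using IVT'[of "\<lambda>l. (-1)^k * Feven k l" lstar 0 th] Feven_lstar[OF k1] Gth thls that
      by force
  qed
  have r'SP: "r' \<in> SP (n+1)" unfolding SP_def using r' lstar_pos eve[of r'] by auto
  have plus: "mu_plus (antireg_adj (n+1)) \<le> mu_plus (antireg_adj n)"
  proof -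
    have "Min (SP (n+1)) \<le> r'" using finSP r'SP by simp
    then show ?thesis using r'(2) unfolding mu_plus_def th_def SP_def by simp
  qed
  define SM where "SM m = {x. eigenvalue (antireg_adj m) x \<and> x < -1}" for m
  have finSM: "finite (SM m)" for m unfolding SM_def by (rule fin_eig)
  define m0 where "m0 = -1-l0"
  have m0ls: "m0 < -1-lstar" using lsl0 by (simp add: m0_def)
  have Gls: "(-1)^k * Fodd k (-1-lstar) > 0" using Fodd_gap_neg[OF k1] lstar_pos by simp
  obtain q where q: "m0 \<le> q" "q \<le> -1-lstar" "(-1)^k * Fodd k q = 0"
  proof -
    have "continuous_on {m0..-1-lstar} (\<lambda>l. (-1)^k * Fodd k l)"
      using lstar_pos by (intro Fodd_cont) auto
    then show ?thesis using IVT'[of "\<lambda>l. (-1)^k * Fodd k l" m0 0 "-1-lstar"] l0(3) Gls m0ls that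
      unfolding m0_def by force
  qed
  have qSM: "q \<in> SM n" unfolding SM_def using q lstar_pos evo[of q] by auto
  define et where "et = Max (SM n)"
  have etSM: "et \<in> SM n" unfolding et_def using finSM qSM by (intro Max_in) auto
  have qet: "q \<le> et" unfolding et_def using finSM qSM by simp
  have et1: "et < -1" and etF: "(-1)^k * Fodd k et = 0" using etSM evo[of et] by (auto simp: SM_def)
  have etm0: "m0 < et" using qet q(1) etF l0(3) unfolding m0_def by (cases "et = -1-l0") auto
  have Get: "(-1)^k * Feven k et > 0"
    using Ge_pos[of et k] et1 etF Vpos[of et] etm0 unfolding m0_def by simp
  obtain q' where q': "m0 \<le> q'" "q' \<le> et" "(-1)^k * Feven k q' = 0"
  proof -
    have "continuous_on {m0..et} (\<lambda>l. (-1)^k * Feven k l)"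
      using et1 by (intro Feven_cont) auto
    then show ?thesis using IVT'[of "\<lambda>l. (-1)^k * Feven k l" m0 0 et] l0(4) Get etm0 that
      unfolding m0_def by force
  qed
  have q'SM: "q' \<in> SM (n+1)" unfolding SM_def using q' et1 eve[of q'] by auto
  have bound: "y \<le> et" if y: "y \<in> SM (n+1)" for y
  proof (rule ccontr)
    assume "\<not> y \<le> et"
    then have yet: "et < y" by simp
    have y1: "y < -1" and yF: "(-1)^k * Feven k y = 0" using y eve[of y] by (auto simp: SM_def)
    have Goy: "(-1)^k * Fodd k y > 0"
    proof (cases "-1-lstar \<le> y")
      case True then show ?thesis using Fodd_gap_neg[OF k1 True y1] by simp
    next
      case False
      show ?thesis
      proof (rule ccontr)
        assume "\<not> ?thesis"
        then have "(-1)^k * Fodd k y \<le> 0" by simp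
        moreover have "continuous_on {y..-1-lstar} (\<lambda>l. (-1)^k * Fodd k l)"
          using lstar_pos by (intro Fodd_cont) auto
        ultimately obtain z where z: "y \<le> z" "z \<le> -1-lstar" "(-1)^k * Fodd k z = 0"
          using IVT'[of "\<lambda>l. (-1)^k * Fodd k l" y 0 "-1-lstar"] Gls False by force
        then have "z \<in> SM n" unfolding SM_def using lstar_pos evo[of z] by auto
        then have "z \<le> et" unfolding et_def using finSM by simp
        with z(1) yet show False by simp
      qed
    qed
    have "(1 - 1/y) * ((-1)^k * Fodd k y) \<ge> 0"
    proof -
      have "1 - 1/y > 0" using y1 by (simp add: field_simps)
      then show ?thesis using Goy by simp
    qed
    then have "(-1)^k * Feven k y > 0" using Ge_pos[of y k] y1 Vpos[of y] etm0 yet unfolding m0_def by simp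
    with yF show False by simp
  qed
  have minus: "mu_minus (antireg_adj (n+1)) \<le> mu_minus (antireg_adj n)"
  proof -
    have "Max (SM (n+1)) \<le> et" using finSM q'SM bound by (subst Max_le_iff) auto
    then show ?thesis unfolding mu_minus_def et_def SM_def by simp
  qed
  show ?thesis using plus minus by simp
qed

end
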